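(* Fix integers $k\ge 3$ and $r\ge 1$. For $n\ge 0$ let $d_n$ be the number of words on $[n]^r$ that avoid both $1234$ and $1k(k-1)\cdots 2$. Then the sequence $(d_n)_{n\ge0}$ satisfies a linear recurrence with constant coefficients; equivalently, $\sum_{n\ge 0} d_n x^n$ is a rational function of $x$.
   Context: A word on $[n]^r$ is a word in which each letter $1,2,\dots,n$ appears exactly $r$ times and no other letter appears (for $r=1$ these are the permutations of $[n]$). A word $w_1\cdots w_m$ contains a pattern $p_1\cdots p_k$ if there are indices $i_1<\dots<i_k$ such that for all $r,s$: $w_{i_r}<w_{i_s}\iff p_r<p_s$ and $w_{i_r}>w_{i_s}\iff p_r>p_s$; otherwise it avoids it. The pattern $1k(k-1)\cdots 2$ is $1$ followed by $k,k-1,\dots,2$. *)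

theory Defs
  imports Complex_Main
begin

definition words :: "nat \<Rightarrow> nat \<Rightarrow> nat list set" where
  "words n r = {w. set w \<subseteq> {1..n} \<and> (\<forall>i\<in>{1..n}. count_list w i = r)}"

definition contains :: "nat list \<Rightarrow> nat list \<Rightarrow> bool" where
  "contains w p \<longleftrightarrow> (\<exists>f :: nat \<Rightarrow> nat.
      strict_mono_on {0..<length p} f \<and> (\<forall>j<length p. f j < length w) \<and>
      (\<forall>a<length p. \<forall>b<length p.
          (w ! f a < w ! f b \<longleftrightarrow> p ! a < p ! b) \<and>
          (w ! f a > w ! f b \<longleftrightarrow> p ! a > p ! b)))"

definition avoids :: "nat list \<Rightarrow> nat list \<Rightarrow> bool" where
  "avoids w p \<longleftrightarrow> \<not> contains w p"

definition pat1k :: "nat \<Rightarrow> nat list" where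
  "pat1k k = 1 # rev [2..<k+1]"

definition d :: "nat \<Rightarrow> nat \<Rightarrow> nat \<Rightarrow> nat" where
  "d k r n = card {w \<in> words n r. avoids w [1,2,3,4] \<and> avoids w (pat1k k)}"

end

theory Submission
  imports Defs "HOL-Library.Sublist"
begin


definition oiso :: "nat list \<Rightarrow> nat list \<Rightarrow> bool" where
  "oiso s p \<longleftrightarrow> length s = length p \<and> (\<forall>a<length p. \<forall>b<length p.
          (s ! a < s ! b \<longleftrightarrow> p ! a < p ! b) \<and> (s ! a > s ! b \<longleftrightarrow> p ! a > p ! b))"

lemma subseq_of_idx:
  "strict_mono_on {0..<m} f \<Longrightarrow> (\<forall>j<m. f j < length w) \<Longrightarrow> subseq (map (\<lambda>j. w ! f j) [0..<m]) w"
proof (induction w arbitrary: m f)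
  case Nil
  then show ?case by (cases m) auto
next
  case (Cons y ys)
  have mono: "f a < f b" if "a < b" "b < m" for a b
    using Cons.prems(1) that unfolding strict_mono_on_def by simp
  show ?case
  proof (cases m)
    case 0 then show ?thesis by simp
  next
    case (Suc m')
    show ?thesis
    proof (cases "f 0 = 0")
      case True
      have pos: "f (Suc j) > 0" if "j < m'" for j
        using mono[of 0 "Suc j"] that Suc by simp
      have sm: "strict_mono_on {0..<m'} (\<lambda>j. f (Suc j) - 1)"
      proof (rule strict_mono_onI)
        fix a b assume ab: "a \<in> {0..<m'}" "b \<in> {0..<m'}" "a < b"
        then have "f (Suc a) < f (Suc b)" using mono[of "Suc a" "Suc b"] Suc by simp
        then show "f (Suc a) - 1 < f (Suc b) - 1" using pos[of a] ab by simp
      qed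
      have bd: "\<forall>j<m'. f (Suc j) - 1 < length ys"
      proof (intro allI impI)
        fix j assume "j < m'"
        then have "f (Suc j) < Suc (length ys)" using Cons.prems(2) Suc by auto
        then show "f (Suc j) - 1 < length ys" using pos[OF \<open>j < m'\<close>] by simp
      qed
      have "subseq (map (\<lambda>j. ys ! (f (Suc j) - 1)) [0..<m']) ys"
        using Cons.IH[OF sm bd] .
      moreover have "map (\<lambda>j. (y#ys) ! f j) [0..<m] = y # map (\<lambda>j. ys ! (f (Suc j) - 1)) [0..<m']"
      proof -
        have "[0..<m] = 0 # map Suc [0..<m']" using Suc by (simp add: map_Suc_upt upt_conv_Cons)
        then show ?thesis using True pos by (simp add: nth_Cons') (use pos in force)
      qed
      ultimately show ?thesis by simp
    next
      case False
      have pos: "f j > 0" if "j < m" for j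
      proof (cases j)
        case 0 then show ?thesis using False by simp
      next
        case (Suc j') then show ?thesis using mono[of 0 j] that by simp
      qed
      have sm: "strict_mono_on {0..<m} (\<lambda>j. f j - 1)"
      proof (rule strict_mono_onI)
        fix a b assume ab: "a \<in> {0..<m}" "b \<in> {0..<m}" "a < b"
        then have "f a < f b" using mono[of a b] by simp
        then show "f a - 1 < f b - 1" using pos[of a] ab by simp
      qed
      have bd: "\<forall>j<m. f j - 1 < length ys"
      proof (intro allI impI)
        fix j assume "j < m"
        then have "f j < Suc (length ys)" using Cons.prems(2) by auto
        then show "f j - 1 < length ys" using pos[OF \<open>j < m\<close>] by simp
      qed
      have "subseq (map (\<lambda>j. ys ! (f j - 1)) [0..<m]) ys"
        using Cons.IH[OF sm bd] .
      moreover have "map (\<lambda>j. (y#ys) ! f j) [0..<m] = map (\<lambda>j. ys ! (f j - 1)) [0..<m]"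
        using pos by (simp add: nth_Cons') (use pos in force)
      ultimately show ?thesis by (metis list_emb_Cons)
    qed
  qed
qed

lemma idx_of_subseq:
  "subseq s w \<Longrightarrow> \<exists>f. strict_mono_on {0..<length s} f \<and> (\<forall>j<length s. f j < length w \<and> w ! f j = s ! j)"
proof (induction rule: list_emb.induct)
  case (list_emb_Nil ys)
  then show ?case by (auto simp: strict_mono_on_def)
next
  case (list_emb_Cons xs ys y)
  then obtain f where f: "strict_mono_on {0..<length xs} f" "\<forall>j<length xs. f j < length ys \<and> ys ! f j = xs ! j" by blast
  have "strict_mono_on {0..<length xs} (\<lambda>j. Suc (f j))"
    using f(1) unfolding strict_mono_on_def by simp
  then show ?case using f(2) by (intro exI[of _ "\<lambda>j. Suc (f j)"]) simp
next
  case (list_emb_Cons2 x y xs ys)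
  then obtain f where f: "strict_mono_on {0..<length xs} f" "\<forall>j<length xs. f j < length ys \<and> ys ! f j = xs ! j" by blast
  define g where "g j = (case j of 0 \<Rightarrow> 0 | Suc i \<Rightarrow> Suc (f i))" for j
  have "strict_mono_on {0..<length (x#xs)} g"
  proof (rule strict_mono_onI)
    fix a b assume ab: "a \<in> {0..<length (x#xs)}" "b \<in> {0..<length (x#xs)}" "a < b"
    then obtain b' where b': "b = Suc b'" by (cases b) auto
    show "g a < g b"
    proof (cases a)
      case 0 then show ?thesis using b' by (simp add: g_def)
    next
      case (Suc a') then show ?thesis using b' ab f(1) unfolding strict_mono_on_def by (simp add: g_def)
    qed
  qed
  moreover have "\<forall>j<length (x#xs). g j < length (y#ys) \<and> (y#ys) ! g j = (x#xs) ! j"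
  proof (intro allI impI)
    fix j assume "j < length (x#xs)"
    then show "g j < length (y#ys) \<and> (y#ys) ! g j = (x#xs) ! j"
      using f(2) list_emb_Cons2.hyps(1) by (cases j) (auto simp: g_def)
  qed
  ultimately show ?case by blast
qed

lemma contains_iff: "contains w p \<longleftrightarrow> (\<exists>s. subseq s w \<and> oiso s p)"
proof
  assume "contains w p"
  then obtain f where f: "strict_mono_on {0..<length p} f" "\<forall>j<length p. f j < length w"
    "\<forall>a<length p. \<forall>b<length p. (w ! f a < w ! f b \<longleftrightarrow> p ! a < p ! b) \<and> (w ! f a > w ! f b \<longleftrightarrow> p ! a > p ! b)"
    unfolding contains_def by blast
  show "\<exists>s. subseq s w \<and> oiso s p"
    by (rule exI[of _ "map (\<lambda>j. w ! f j) [0..<length p]"])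
       (use f subseq_of_idx[OF f(1,2)] in \<open>auto simp: oiso_def\<close>)
next
  assume "\<exists>s. subseq s w \<and> oiso s p"
  then obtain s where s: "subseq s w" "oiso s p" by blast
  then obtain f where f: "strict_mono_on {0..<length s} f" "\<forall>j<length s. f j < length w \<and> w ! f j = s ! j"
    using idx_of_subseq by blast
  show "contains w p" unfolding contains_def
    by (rule exI[of _ f]) (use s f in \<open>auto simp: oiso_def\<close>)
qed

lemma subseq_set: "subseq s x \<Longrightarrow> set s \<subseteq> set x"
  by (induct rule: list_emb.induct) auto

lemma contains_subseq: "contains x p \<Longrightarrow> subseq x y \<Longrightarrow> contains y p"
  unfolding contains_iff by (meson subseq_order.order_trans)

lemma not_contains_Nil: "p \<noteq> [] \<Longrightarrow> \<not> contains [] p"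
  unfolding contains_iff oiso_def by auto

lemma oiso_map:
  assumes "\<forall>u\<in>set s. \<forall>v\<in>set s. (h u < h v \<longleftrightarrow> u < v)"
  shows "oiso (map h s) p \<longleftrightarrow> oiso s p"
proof -
  have "(h (s!a) < h (s!b) \<longleftrightarrow> s!a < s!b)" if "a < length s" "b < length s" for a b
    using assms that by simp
  then show ?thesis unfolding oiso_def by auto
qed

lemma oiso_map_anti:
  assumes "\<forall>u\<in>set s. \<forall>v\<in>set s. (h u < h v \<longleftrightarrow> v < u)"
      and "\<forall>u\<in>set p. \<forall>v\<in>set p. (g u < g v \<longleftrightarrow> v < u)"
  shows "oiso (map h s) (map g p) \<longleftrightarrow> oiso s p"
proof -
  have 1: "(h (s!a) < h (s!b) \<longleftrightarrow> s!b < s!a)" if "a < length s" "b < length s" for a b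
    using assms that by simp
  have 2: "(g (p!a) < g (p!b) \<longleftrightarrow> p!b < p!a)" if "a < length p" "b < length p" for a b
    using assms that by simp
  show ?thesis unfolding oiso_def using 1 2 by auto
qed

lemma subseq_map_inv:
  "subseq s (map h x) \<Longrightarrow> \<exists>s'. subseq s' x \<and> s = map h s'"
proof (induction x arbitrary: s)
  case Nil then show ?case by auto
next
  case (Cons a x)
  show ?case
  proof (cases s)
    case Nil then show ?thesis by auto
  next
    case (Cons b s1)
    show ?thesis
    proof (cases "b = h a")
      case True
      then have "subseq s1 (map h x)" using Cons.prems Cons by simp
      then obtain s' where "subseq s' x" "s1 = map h s'" using Cons.IH by blast
      then show ?thesis using True Cons by (intro exI[of _ "a # s'"]) simp
    next
      case False
      then have "subseq s (map h x)" using Cons.prems Cons by simp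
      then obtain s' where "subseq s' x" "s = map h s'" using Cons.IH by blast
      then show ?thesis by (intro exI[of _ s']) auto
    qed
  qed
qed

lemma contains_map:
  assumes "\<forall>u\<in>set x. \<forall>v\<in>set x. (h u < h v \<longleftrightarrow> u < v)"
  shows "contains (map h x) p \<longleftrightarrow> contains x p"
proof
  assume "contains (map h x) p"
  then obtain s where s: "subseq s (map h x)" "oiso s p" unfolding contains_iff by blast
  then obtain s' where s': "subseq s' x" "s = map h s'" using subseq_map_inv by blast
  have "set s' \<subseteq> set x" using s'(1) by (rule subseq_set)
  then have "\<forall>u\<in>set s'. \<forall>v\<in>set s'. (h u < h v \<longleftrightarrow> u < v)" using assms(1) by blast
  then have "oiso s' p" using s(2) s'(2) oiso_map[of s' h p] by simp
  then show "contains x p" using s'(1) unfolding contains_iff by blast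
next
  assume "contains x p"
  then obtain s where s: "subseq s x" "oiso s p" unfolding contains_iff by blast
  have "set s \<subseteq> set x" using s(1) by (rule subseq_set)
  then have "\<forall>u\<in>set s. \<forall>v\<in>set s. (h u < h v \<longleftrightarrow> u < v)" using assms(1) by blast
  then have "oiso (map h s) p" using s(2) oiso_map[of s h p] by simp
  then show "contains (map h x) p" using subseq_map[OF s(1)] unfolding contains_iff by blast
qed

lemma contains_map_anti:
  assumes "\<forall>u\<in>set x. \<forall>v\<in>set x. (h u < h v \<longleftrightarrow> v < u)"
      and "\<forall>u\<in>set p. \<forall>v\<in>set p. (g u < g v \<longleftrightarrow> v < u)"
  shows "contains (map h x) (map g p) \<longleftrightarrow> contains x p"
proof
  assume "contains (map h x) (map g p)"
  then obtain s where s: "subseq s (map h x)" "oiso s (map g p)" unfolding contains_iff by blast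
  then obtain s' where s': "subseq s' x" "s = map h s'" using subseq_map_inv by blast
  have "set s' \<subseteq> set x" using s'(1) by (rule subseq_set)
  then have "\<forall>u\<in>set s'. \<forall>v\<in>set s'. (h u < h v \<longleftrightarrow> v < u)" using assms(1) by blast
  then have "oiso s' p" using s(2) s'(2) oiso_map_anti[of s' h p g] assms(2) by simp
  then show "contains x p" using s'(1) unfolding contains_iff by blast
next
  assume "contains x p"
  then obtain s where s: "subseq s x" "oiso s p" unfolding contains_iff by blast
  have "set s \<subseteq> set x" using s(1) by (rule subseq_set)
  then have "\<forall>u\<in>set s. \<forall>v\<in>set s. (h u < h v \<longleftrightarrow> v < u)" using assms(1) by blast
  then have "oiso (map h s) (map g p)" using s(2) oiso_map_anti[of s h p g] assms(2) by simp
  then show "contains (map h x) (map g p)" using subseq_map[OF s(1)] unfolding contains_iff by blast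
qed

lemma oiso_ConsI:
  assumes "oiso s q" "\<forall>z\<in>set s. z < M" "\<forall>z\<in>set q. z < x"
  shows "oiso (M#s) (x#q)"
proof -
  have l: "length s = length q" using assms(1) oiso_def by simp
  have A: "\<forall>a<length q. \<forall>b<length q. (s ! a < s ! b \<longleftrightarrow> q ! a < q ! b) \<and> (s ! a > s ! b \<longleftrightarrow> q ! a > q ! b)"
    using assms(1) oiso_def by simp
  have sM: "s ! a < M" if "a < length q" for a using assms(2) l that by simp
  have qx: "q ! a < x" if "a < length q" for a using assms(3) that by simp
  show ?thesis unfolding oiso_def
  proof (intro conjI allI impI)
    show "length (M#s) = length (x#q)" using l by simp
  next
    fix a b assume ab: "a < length (x#q)" "b < length (x#q)"
    have "((M # s) ! a < (M # s) ! b) = ((x # q) ! a < (x # q) ! b) \<and> ((M # s) ! a > (M # s) ! b) = ((x # q) ! a > (x # q) ! b)"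
    proof (cases a)
      case 0
      then show ?thesis
      proof (cases b)
        case (Suc b')
        then have "b' < length q" using ab by simp
        then show ?thesis using 0 Suc sM[of b'] qx[of b'] by simp
      qed simp
    next
      case (Suc a')
      then have a': "a' < length q" using ab by simp
      show ?thesis
      proof (cases b)
        case 0
        then show ?thesis using Suc sM[OF a'] qx[OF a'] by simp
      next
        case (Suc b')
        then have "b' < length q" using ab by simp
        then show ?thesis using \<open>a = Suc a'\<close> Suc A a' by simp
      qed
    qed
    then show "((M # s) ! a < (M # s) ! b) = ((x # q) ! a < (x # q) ! b)"
       "((M # s) ! a > (M # s) ! b) = ((x # q) ! a > (x # q) ! b)" by blast+
  qed
qed

lemma oiso_ConsD:
  assumes "oiso (y#s) (x#q)" "\<forall>z\<in>set q. z < x"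
  shows "oiso s q \<and> (\<forall>z\<in>set s. z < y)"
proof -
  have l: "length s = length q" using assms(1) oiso_def by simp
  have A: "\<forall>a<Suc (length q). \<forall>b<Suc (length q). ((y#s) ! a < (y#s) ! b \<longleftrightarrow> (x#q) ! a < (x#q) ! b) \<and> ((y#s) ! a > (y#s) ! b \<longleftrightarrow> (x#q) ! a > (x#q) ! b)"
    using assms(1) oiso_def by simp
  have "oiso s q" unfolding oiso_def
  proof (intro conjI allI impI)
    fix a b assume "a < length q" "b < length q"
    then show "(s ! a < s ! b) = (q ! a < q ! b)" "(s ! a > s ! b) = (q ! a > q ! b)"
      using A[rule_format, of "Suc a" "Suc b"] by auto
  qed (use l in simp)
  moreover have "\<forall>z\<in>set s. z < y"
  proof
    fix z assume "z \<in> set s"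
    then obtain a where a: "a < length s" "s ! a = z" by (meson in_set_conv_nth)
    have "q ! a < x" using assms(2) a l by simp
    then show "z < y" using A[rule_format, of "Suc a" 0] a l by simp
  qed
  ultimately show ?thesis by blast
qed

lemma oiso_321: "a > b \<Longrightarrow> b > c \<Longrightarrow> oiso [a,b,c] [3,2,1]"
  unfolding oiso_def by (auto simp: less_Suc_eq nth_Cons')

lemma oiso_inc: "sorted_wrt (<) s \<Longrightarrow> length s = k - 1 \<Longrightarrow> oiso s [1..<k]"
proof -
  assume s: "sorted_wrt (<) s" "length s = k - 1"
  have *: "s ! a < s ! b \<longleftrightarrow> a < b" if "a < length s" "b < length s" for a b
  proof
    assume "a < b" then show "s ! a < s ! b" using s(1) that by (simp add: sorted_wrt_iff_nth_less)
  next
    assume h: "s ! a < s ! b"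
    show "a < b"
    proof (rule ccontr)
      assume "\<not> a < b"
      then have "b < a \<or> b = a" by auto
      then show False
      proof
        assume "b < a" then have "s ! b < s ! a" using s(1) that by (simp add: sorted_wrt_iff_nth_less)
        then show False using h by simp
      qed (use h in simp)
    qed
  qed
  show ?thesis unfolding oiso_def using * s(2) by auto
qed



definition good :: "nat \<Rightarrow> nat list \<Rightarrow> bool" where
  "good k x \<longleftrightarrow> \<not> contains x [3,2,1] \<and> \<not> contains x [1..<k]"

definition avoid2 :: "nat \<Rightarrow> nat list \<Rightarrow> bool" where
  "avoid2 k w \<longleftrightarrow> \<not> contains w [4,3,2,1] \<and> \<not> contains w (k # [1..<k])"

lemma contains_max:
  assumes "\<forall>z\<in>set w. z \<le> M" "\<forall>z\<in>set q. z < x"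
  shows "contains w (x#q) \<longleftrightarrow> contains (filter (\<lambda>z. z \<noteq> M) w) (x#q) \<or>
           (\<exists>u v. w = u @ M # v \<and> contains (filter (\<lambda>z. z \<noteq> M) v) q)"
proof
  assume "contains w (x#q)"
  then obtain s where s: "subseq s w" "oiso s (x#q)" unfolding contains_iff by blast
  then obtain y s' where ys: "s = y # s'" unfolding oiso_def by (cases s) auto
  have o: "oiso s' q" and lt: "\<forall>z\<in>set s'. z < y" using oiso_ConsD[of y s' x q] s(2) ys assms(2) by auto
  show "contains (filter (\<lambda>z. z \<noteq> M) w) (x#q) \<or>
           (\<exists>u v. w = u @ M # v \<and> contains (filter (\<lambda>z. z \<noteq> M) v) q)"
  proof (cases "y = M")
    case True
    obtain us v vs where w: "w = us @ v # vs" "y = v" "subseq s' vs"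
      using list_emb_ConsD[of "(=)" y s' w] s(1) ys by auto
    have "filter (\<lambda>z. z \<noteq> M) s' = s'" using lt True by (auto simp: filter_id_conv)
    then have "subseq s' (filter (\<lambda>z. z \<noteq> M) vs)" using subseq_filter[OF w(3), of "\<lambda>z. z \<noteq> M"] by simp
    then have "contains (filter (\<lambda>z. z \<noteq> M) vs) q" using o unfolding contains_iff by blast
    then show ?thesis using w True by blast
  next
    case False
    have "y \<in> set w" using s(1) ys subseq_set by fastforce
    then have "y < M" using assms(1) False by force
    then have "filter (\<lambda>z. z \<noteq> M) s = s" using lt ys by (auto simp: filter_id_conv)
    then have "subseq s (filter (\<lambda>z. z \<noteq> M) w)" using subseq_filter[OF s(1), of "\<lambda>z. z \<noteq> M"] by simp
    then show ?thesis using s(2) unfolding contains_iff by blast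
  qed
next
  assume "contains (filter (\<lambda>z. z \<noteq> M) w) (x#q) \<or>
           (\<exists>u v. w = u @ M # v \<and> contains (filter (\<lambda>z. z \<noteq> M) v) q)"
  then show "contains w (x#q)"
  proof
    assume "contains (filter (\<lambda>z. z \<noteq> M) w) (x#q)"
    then show ?thesis using contains_subseq subseq_filter_left by blast
  next
    assume "\<exists>u v. w = u @ M # v \<and> contains (filter (\<lambda>z. z \<noteq> M) v) q"
    then obtain u v s where uv: "w = u @ M # v" "subseq s (filter (\<lambda>z. z \<noteq> M) v)" "oiso s q"
      unfolding contains_iff by blast
    have "subseq s v" using uv(2) subseq_filter_left subseq_order.order_trans by blast
    then have "subseq (M#s) w" using uv(1) by auto
    moreover have "\<forall>z\<in>set s. z < M"
    proof
      fix z assume "z \<in> set s"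
      then have "z \<in> set (filter (\<lambda>z. z \<noteq> M) v)" using uv(2) subseq_set by blast
      then have "z \<in> set w" "z \<noteq> M" using uv(1) by auto
      then show "z < M" using assms(1) by force
    qed
    ultimately show ?thesis using oiso_ConsI[OF uv(3) _ assms(2)] unfolding contains_iff by blast
  qed
qed

lemma avoid_max:
  assumes "\<forall>z\<in>set w. z \<le> M"
  shows "avoid2 k w \<longleftrightarrow> avoid2 k (filter (\<lambda>z. z \<noteq> M) w) \<and>
           (\<forall>u v. w = u @ M # v \<longrightarrow> good k (filter (\<lambda>z. z \<noteq> M) v))"
proof -
  have 1: "contains w [4,3,2,1] \<longleftrightarrow> contains (filter (\<lambda>z. z \<noteq> M) w) [4,3,2,1] \<or>
           (\<exists>u v. w = u @ M # v \<and> contains (filter (\<lambda>z. z \<noteq> M) v) [3,2,1])"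
    using contains_max[OF assms, of "[3,2,1]" 4] by simp
  have 2: "contains w (k#[1..<k]) \<longleftrightarrow> contains (filter (\<lambda>z. z \<noteq> M) w) (k#[1..<k]) \<or>
           (\<exists>u v. w = u @ M # v \<and> contains (filter (\<lambda>z. z \<noteq> M) v) [1..<k])"
    using contains_max[OF assms, of "[1..<k]" k] by simp
  show ?thesis unfolding avoid2_def good_def 1 2 by blast
qed

lemma good_Nil: "k \<ge> 2 \<Longrightarrow> good k []"
  unfolding good_def using not_contains_Nil by simp

lemma good_subseq: "good k y \<Longrightarrow> subseq x y \<Longrightarrow> good k x"
  unfolding good_def using contains_subseq by blast

lemma good_map:
  assumes "\<forall>u\<in>set x. \<forall>v\<in>set x. (h u < h v \<longleftrightarrow> u < v)"
  shows "good k (map h x) \<longleftrightarrow> good k x"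
  unfolding good_def using contains_map[OF assms] by simp

definition lst :: "nat \<Rightarrow> nat list \<Rightarrow> nat" where
  "lst k w = (LEAST i. good k (drop i w))"

definition msuf :: "nat \<Rightarrow> nat list \<Rightarrow> nat list" where
  "msuf k w = drop (lst k w) w"

definition pre :: "nat \<Rightarrow> nat list \<Rightarrow> nat list" where
  "pre k w = take (lst k w) w"

lemma lst_le: "k \<ge> 2 \<Longrightarrow> lst k w \<le> length w"
  unfolding lst_def by (rule Least_le) (simp add: good_Nil)

lemma good_msuf: "k \<ge> 2 \<Longrightarrow> good k (msuf k w)"
  unfolding msuf_def lst_def by (rule LeastI[of _ "length w"]) (simp add: good_Nil)

lemma lst_min: "good k (drop i w) \<Longrightarrow> lst k w \<le> i"
  unfolding lst_def by (rule Least_le)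

lemma not_good_before: "i < lst k w \<Longrightarrow> \<not> good k (drop i w)"
  unfolding lst_def by (rule not_less_Least)

lemma pre_msuf: "pre k w @ msuf k w = w"
  unfolding pre_def msuf_def by simp

lemma msuf_unique:
  assumes "w = a @ s" "good k s" "\<forall>i<length a. \<not> good k (drop i w)"
  shows "msuf k w = s"
proof -
  have "lst k w = length a"
    unfolding lst_def
  proof (rule Least_equality)
    show "good k (drop (length a) w)" using assms by simp
    fix y assume "good k (drop y w)" then show "length a \<le> y" using assms(3) by (meson not_less)
  qed
  then show ?thesis unfolding msuf_def using assms(1) by simp
qed

lemma msuf_map:
  assumes "\<forall>u\<in>set w. \<forall>v\<in>set w. (h u < h v \<longleftrightarrow> u < v)"
  shows "msuf k (map h w) = map h (msuf k w)"
proof -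
  have "good k (drop i (map h w)) \<longleftrightarrow> good k (drop i w)" for i
  proof -
    have "set (drop i w) \<subseteq> set w" by (rule set_drop_subset)
    then have "\<forall>u\<in>set (drop i w). \<forall>v\<in>set (drop i w). (h u < h v \<longleftrightarrow> u < v)" using assms by blast
    then show ?thesis using good_map[of "drop i w" h k] by (simp add: drop_map)
  qed
  then have "lst k (map h w) = lst k w" unfolding lst_def by simp
  then show ?thesis unfolding msuf_def by (simp add: drop_map)
qed



fun mins :: "nat \<Rightarrow> nat list \<Rightarrow> nat list" where
  "mins b [] = []"
| "mins b (x#xs) = (if x < b then x # mins x xs else mins b xs)"

fun rest :: "nat \<Rightarrow> nat list \<Rightarrow> nat list" where
  "rest b [] = []"
| "rest b (x#xs) = (if x < b then rest x xs else x # rest b xs)"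

lemma len_mins_rest: "length (mins b xs) + length (rest b xs) = length xs"
  by (induction xs arbitrary: b) auto

lemma subseq_mins: "subseq (mins b xs) xs"
  by (induction xs arbitrary: b) auto

lemma subseq_rest: "subseq (rest b xs) xs"
  by (induction xs arbitrary: b) auto

lemma mins_sorted: "sorted_wrt (>) (mins b xs) \<and> (\<forall>z\<in>set (mins b xs). z < b)"
proof (induction xs arbitrary: b)
  case (Cons x xs)
  show ?case
  proof (cases "x < b")
    case True
    then show ?thesis using Cons.IH[of x] by auto
  next
    case False
    then show ?thesis using Cons.IH[of b] by auto
  qed
qed simp

lemma subseq_distinct: "subseq s x \<Longrightarrow> distinct x \<Longrightarrow> distinct s"
proof (induction rule: list_emb.induct)
  case (list_emb_Cons2 x y xs ys)
  then show ?case using subseq_set by fastforce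
qed auto

lemma rest_pred:
  "distinct (b#xs) \<Longrightarrow> subseq (z#s) (rest b xs) \<Longrightarrow> \<exists>c. c < z \<and> subseq (c#z#s) (b#xs)"
proof (induction xs arbitrary: b)
  case Nil then show ?case by simp
next
  case (Cons x xs)
  show ?case
  proof (cases "x < b")
    case True
    then have "subseq (z#s) (rest x xs)" using Cons.prems by simp
    moreover have "distinct (x#xs)" using Cons.prems by simp
    ultimately obtain c where "c < z" "subseq (c#z#s) (x#xs)" using Cons.IH by blast
    then show ?thesis using list_emb_Cons by blast
  next
    case False
    then have xb: "b < x" using Cons.prems by auto
    have r: "subseq (z#s) (x # rest b xs)" using Cons.prems False by simp
    show ?thesis
    proof (cases "z = x")
      case True
      then have "subseq s (rest b xs)" using r by simp
      then have "subseq s xs" using subseq_rest subseq_order.order_trans by blast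
      then have "subseq (b#x#s) (b#x#xs)" by (intro list_emb_Cons2) auto
      then show ?thesis using True xb by blast
    next
      case False
      then have "subseq (z#s) (rest b xs)" using r by simp
      moreover have "distinct (b#xs)" using Cons.prems by simp
      ultimately obtain c where c: "c < z" "subseq (c#z#s) (b#xs)" using Cons.IH by blast
      have "subseq (b#xs) (b#x#xs)" by (intro list_emb_Cons2 list_emb_Cons) auto
      then have "subseq (c#z#s) (b#x#xs)" using c(2) subseq_order.order_trans by blast
      then show ?thesis using c(1) by blast
    qed
  qed
qed

lemma len2: "\<not> length (xs::nat list) \<le> 1 \<Longrightarrow> \<exists>p q t. xs = p # q # t"
  by (cases xs; cases "tl xs") auto

lemma bound_distinct:
  "distinct (y::nat list) \<Longrightarrow> \<not>(\<exists>a b c. subseq [a,b,c] y \<and> a > b \<and> b > c) \<Longrightarrow>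
   \<not>(\<exists>s. subseq s y \<and> length s = Suc m \<and> sorted_wrt (<) s) \<Longrightarrow> length y \<le> 2 * Suc m"
proof (induction m arbitrary: y)
  case 0
  show ?case
  proof (cases y)
    case (Cons a ys)
    then have "subseq [a] y" by simp
    then show ?thesis using "0.prems"(3) by force
  qed simp
next
  case (Suc m)
  show ?case
  proof (cases y)
    case Nil then show ?thesis by simp
  next
    case (Cons a ys)
    have m2: "length (mins a ys) \<le> 1"
    proof (rule ccontr)
      assume "\<not> length (mins a ys) \<le> 1"
      then obtain p q t where pq: "mins a ys = p # q # t" using len2 by blast
      have so: "a > p" "p > q" using mins_sorted[of a ys] pq by auto
      have "subseq [p,q] (mins a ys)" using pq by simp
      then have "subseq [p,q] ys" using subseq_mins subseq_order.order_trans by blast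
      then have "subseq [a,p,q] y" using Cons by simp
      then show False using Suc.prems(2) so by blast
    qed
    have rd: "distinct (rest a ys)" using subseq_distinct[OF subseq_rest] Suc.prems(1) Cons by simp
    have rsub: "subseq (rest a ys) y" using subseq_rest[of a ys] Cons by auto
    have r321: "\<not>(\<exists>p q u. subseq [p,q,u] (rest a ys) \<and> p > q \<and> q > u)"
    proof
      assume "\<exists>p q u. subseq [p,q,u] (rest a ys) \<and> p > q \<and> q > u"
      then obtain p q u where pqu: "subseq [p,q,u] (rest a ys)" "p > q" "q > u" by blast
      have "subseq [p,q,u] y" using subseq_order.order_trans[OF pqu(1) rsub] .
      then show False using Suc.prems(2) pqu(2,3) by blast
    qed
    have rinc: "\<not>(\<exists>s. subseq s (rest a ys) \<and> length s = Suc m \<and> sorted_wrt (<) s)"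
    proof
      assume "\<exists>s. subseq s (rest a ys) \<and> length s = Suc m \<and> sorted_wrt (<) s"
      then obtain s0 where s0: "subseq s0 (rest a ys)" "length s0 = Suc m" "sorted_wrt (<) s0" by blast
      then obtain z s where zs0: "s0 = z # s" by (cases s0) auto
      have zs: "subseq (z#s) (rest a ys)" "length s = m" "sorted_wrt (<) (z#s)" using s0 zs0 by auto
      obtain c where c: "c < z" "subseq (c#z#s) (a#ys)" using rest_pred[OF _ zs(1)] Suc.prems(1) Cons by blast
      have "sorted_wrt (<) (c#z#s)" using zs(3) c(1) by auto
      moreover have "length (c#z#s) = Suc (Suc m)" using zs(2) by simp
      ultimately show False using Suc.prems(3) c(2) Cons by blast
    qed
    have "length (rest a ys) \<le> 2 * Suc m" using Suc.IH[OF rd r321 rinc] .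
    then show ?thesis using m2 len_mins_rest[of a ys] Cons by simp
  qed
qed

lemma subseq_remdups: "subseq (remdups x) x"
  by (induction x) auto

lemma good_bound:
  assumes "k \<ge> 3" "good k x" "\<forall>a. count_list x a \<le> r"
  shows "length x \<le> r * (2 * (k - 1))"
proof -
  let ?y = "remdups x"
  have sy: "subseq ?y x" by (rule subseq_remdups)
  have n321: "\<not>(\<exists>a b c. subseq [a,b,c] ?y \<and> a > b \<and> b > c)"
  proof
    assume "\<exists>a b c. subseq [a,b,c] ?y \<and> a > b \<and> b > c"
    then obtain a b c where "subseq [a,b,c] x" "a > b" "b > c" using sy subseq_order.order_trans by blast
    then have "contains x [3,2,1]" using oiso_321 unfolding contains_iff by blast
    then show False using assms(2) good_def by simp
  qed
  have ninc: "\<not>(\<exists>s. subseq s ?y \<and> length s = Suc (k - 2) \<and> sorted_wrt (<) s)"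
  proof
    assume "\<exists>s. subseq s ?y \<and> length s = Suc (k - 2) \<and> sorted_wrt (<) s"
    then obtain s where s: "subseq s ?y" "length s = Suc (k - 2)" "sorted_wrt (<) s" by blast
    have "subseq s x" using s(1) sy subseq_order.order_trans by blast
    moreover have "length s = k - 1" using s(2) assms(1) by simp
    ultimately have s: "subseq s x" "length s = k - 1" "sorted_wrt (<) s" using s(3) by auto
    then have "contains x [1..<k]" using oiso_inc unfolding contains_iff by blast
    then show False using assms(2) good_def by simp
  qed
  have "length ?y \<le> 2 * Suc (k - 2)" using bound_distinct[OF distinct_remdups n321 ninc] .
  then have cy: "card (set x) \<le> 2 * (k - 1)" using assms(1) by (simp add: length_remdups_card_conv)
  have "length x = (\<Sum>a\<in>set x. count_list x a)" using sum_count_set[of x "set x"] by simp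
  also have "\<dots> \<le> (\<Sum>a\<in>set x. r)" by (rule sum_mono) (use assms(3) in auto)
  also have "\<dots> = r * card (set x)" by simp
  also have "\<dots> \<le> r * (2 * (k - 1))" using cy by simp
  finally show ?thesis .
qed



definition rank :: "nat list \<Rightarrow> nat \<Rightarrow> nat" where
  "rank xs x = card {y \<in> set xs. y < x}"

definition std :: "nat list \<Rightarrow> nat list" where
  "std xs = map (rank xs) xs"

lemma rank_mono:
  assumes "x \<in> set xs" "y \<in> set xs" "x < y"
  shows "rank xs x < rank xs y"
proof -
  have "{z \<in> set xs. z < x} \<subset> {z \<in> set xs. z < y}" using assms by auto
  then show ?thesis unfolding rank_def by (intro psubset_card_mono) auto
qed

lemma rank_lt:
  assumes "x \<in> set xs"
  shows "rank xs x < length xs"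
proof -
  have "{z \<in> set xs. z < x} \<subset> set xs" using assms by auto
  then have "rank xs x < card (set xs)" unfolding rank_def by (intro psubset_card_mono) auto
  also have "\<dots> \<le> length xs" by (rule card_length)
  finally show ?thesis .
qed

lemma oiso_inj:
  fixes h :: "nat \<Rightarrow> nat"
  assumes "\<forall>u\<in>A. \<forall>v\<in>A. (h u < h v \<longleftrightarrow> u < v)"
  shows "inj_on h A"
proof (rule inj_onI)
  fix u v assume "u \<in> A" "v \<in> A" "h u = h v"
  show "u = v"
  proof (rule ccontr)
    assume "u \<noteq> v"
    then have "u < v \<or> v < u" by auto
    then show False
    proof
      assume "u < v" then have "h u < h v" using assms \<open>u \<in> A\<close> \<open>v \<in> A\<close> by blast
      then show False using \<open>h u = h v\<close> by simp
    next
      assume "v < u" then have "h v < h u" using assms \<open>u \<in> A\<close> \<open>v \<in> A\<close> by blast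
      then show False using \<open>h u = h v\<close> by simp
    qed
  qed
qed

lemma std_map:
  assumes "\<forall>u\<in>set xs. \<forall>v\<in>set xs. (h u < h v \<longleftrightarrow> u < v)"
  shows "std (map h xs) = std xs"
proof -
  have inj: "inj_on h (set xs)" using oiso_inj[OF assms] .
  have "rank (map h xs) (h x) = rank xs x" if x: "x \<in> set xs" for x
  proof -
    have "{y \<in> set (map h xs). y < h x} = h ` {y \<in> set xs. y < x}"
      using assms x by auto
    then have "rank (map h xs) (h x) = card (h ` {y \<in> set xs. y < x})" unfolding rank_def by simp
    also have "\<dots> = card {y \<in> set xs. y < x}"
      by (rule card_image) (use inj in \<open>auto intro: inj_on_subset\<close>)
    finally show ?thesis unfolding rank_def .
  qed
  then show ?thesis unfolding std_def by simp
qed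

lemma length_std[simp]: "length (std xs) = length xs"
  unfolding std_def by simp

lemma set_std: "set (std xs) \<subseteq> {..<length xs}"
  unfolding std_def using rank_lt by auto

definition Ins :: "nat \<Rightarrow> nat list \<Rightarrow> nat \<Rightarrow> nat list set" where
  "Ins r T M = {t. filter (\<lambda>z. z \<noteq> M) t = T \<and> count_list t M = r}"

lemma Ins_length: "t \<in> Ins r T M \<Longrightarrow> length t = length T + r"
proof -
  assume t: "t \<in> Ins r T M"
  have "length (filter (\<lambda>z. z \<noteq> M) t) + length (filter (\<lambda>z. \<not> z \<noteq> M) t) = length t"
    by (rule sum_length_filter_compl)
  moreover have "filter (\<lambda>z. \<not> z \<noteq> M) t = filter ((=) M) t" by (induction t) auto
  ultimately show ?thesis using t unfolding Ins_def by (simp add: count_list_eq_length_filter)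
qed

lemma Ins_set: "t \<in> Ins r T M \<Longrightarrow> set t \<subseteq> insert M (set T)"
proof
  fix z assume t: "t \<in> Ins r T M" and z: "z \<in> set t"
  show "z \<in> insert M (set T)"
  proof (cases "z = M")
    case False
    have e: "filter (\<lambda>z. z \<noteq> M) t = T" using t unfolding Ins_def by simp
    show ?thesis using z False by (subst e[symmetric]) auto
  qed simp
qed

lemma Ins_finite: "finite (Ins r T M)"
proof (rule finite_subset)
  show "Ins r T M \<subseteq> {t. set t \<subseteq> insert M (set T) \<and> length t \<le> length T + r}"
    using Ins_length Ins_set by fastforce
  show "finite {t. set t \<subseteq> insert M (set T) \<and> length t \<le> length T + r}"
    by (rule finite_lists_length_le) simp
qed

lemma count_list_map_inj:
  "inj_on h (insert M (set t)) \<Longrightarrow> count_list (map h t) (h M) = count_list t M"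
proof (induction t)
  case (Cons a t)
  then have "inj_on h (insert M (set t))" by (auto intro: inj_on_subset)
  moreover have "h a = h M \<longleftrightarrow> a = M"
  proof -
    have "a \<in> insert M (set (a#t))" "M \<in> insert M (set (a#t))" by auto
    then show ?thesis using inj_on_eq_iff[OF Cons.prems] by blast
  qed
  ultimately show ?case using Cons.IH by simp
qed simp

lemma filter_map_inj:
  assumes "inj_on h (insert M (set t))"
  shows "filter (\<lambda>z. z \<noteq> h M) (map h t) = map h (filter (\<lambda>z. z \<noteq> M) t)"
proof -
  have "\<forall>z\<in>set t. (h z \<noteq> h M) = (z \<noteq> M)"
  proof
    fix z assume "z \<in> set t"
    then have "z \<in> insert M (set t)" "M \<in> insert M (set t)" by auto
    then show "(h z \<noteq> h M) = (z \<noteq> M)" using inj_on_eq_iff[OF assms] by blast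
  qed
  then have "filter (\<lambda>z. h z \<noteq> h M) t = filter (\<lambda>z. z \<noteq> M) t" by (intro filter_cong) auto
  then show ?thesis by (simp add: filter_map comp_def)
qed

lemma Ins_map:
  assumes inj: "inj_on h (insert M (set T))"
  shows "bij_betw (map h) (Ins r T M) (Ins r (map h T) (h M))"
proof -
  let ?D = "insert M (set T)"
  have inj_t: "inj_on h (insert M (set t))" if "t \<in> Ins r T M" for t
    using Ins_set[OF that] inj by (auto intro: inj_on_subset)
  show ?thesis unfolding bij_betw_def
  proof (intro conjI)
    show "inj_on (map h) (Ins r T M)"
    proof (rule inj_onI)
      fix t1 t2 assume t: "t1 \<in> Ins r T M" "t2 \<in> Ins r T M" "map h t1 = map h t2"
      have "set t1 \<union> set t2 \<subseteq> ?D" using Ins_set t by blast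
      then have "inj_on h (set t1 \<union> set t2)" using inj inj_on_subset by blast
      then show "t1 = t2" using map_inj_on t(3) by blast
    qed
    show "map h ` Ins r T M = Ins r (map h T) (h M)"
    proof
      show "map h ` Ins r T M \<subseteq> Ins r (map h T) (h M)"
      proof
        fix t' assume "t' \<in> map h ` Ins r T M"
        then obtain t where t: "t \<in> Ins r T M" "t' = map h t" by blast
        show "t' \<in> Ins r (map h T) (h M)"
          using t filter_map_inj[OF inj_t[OF t(1)]] count_list_map_inj[OF inj_t[OF t(1)]]
          unfolding Ins_def by simp
      qed
    next
      show "Ins r (map h T) (h M) \<subseteq> map h ` Ins r T M"
      proof
        fix t' assume t': "t' \<in> Ins r (map h T) (h M)"
        have st': "set t' \<subseteq> h ` ?D" using Ins_set[OF t'] by auto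
        define t where "t = map (inv_into ?D h) t'"
        have "\<forall>y\<in>set t'. h (inv_into ?D h y) = y"
        proof
          fix y assume "y \<in> set t'"
          then have "y \<in> h ` ?D" using st' by blast
          then show "h (inv_into ?D h y) = y" by (rule f_inv_into_f)
        qed
        then have ht: "map h t = t'" unfolding t_def by (simp add: map_idI)
        have st: "set t \<subseteq> ?D"
        proof
          fix z assume "z \<in> set t"
          then obtain y where y: "y \<in> set t'" "z = inv_into ?D h y" unfolding t_def by auto
          then have "y \<in> h ` ?D" using st' by blast
          then have "inv_into ?D h y \<in> ?D" by (rule inv_into_into)
          then show "z \<in> ?D" using y(2) by (simp only:)
        qed
        have "insert M (set t) \<subseteq> ?D" using st by simp
        then have injt: "inj_on h (insert M (set t))" by (rule inj_on_subset[OF inj])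
        have "map h (filter (\<lambda>z. z \<noteq> M) t) = map h T"
          using filter_map_inj[OF injt] ht t' unfolding Ins_def by simp
        moreover have "set (filter (\<lambda>z. z \<noteq> M) t) \<union> set T \<subseteq> ?D" using st by auto
        then have "inj_on h (set (filter (\<lambda>z. z \<noteq> M) t) \<union> set T)" by (rule inj_on_subset[OF inj])
        ultimately have "filter (\<lambda>z. z \<noteq> M) t = T" by (rule map_inj_on)
        moreover have "count_list t M = r"
          using count_list_map_inj[OF injt] ht t' unfolding Ins_def by simp
        ultimately have "t \<in> Ins r T M" unfolding Ins_def by simp
        then show "t' \<in> map h ` Ins r T M" using ht by blast
      qed
    qed
  qed
qed

definition Atr :: "nat \<Rightarrow> nat \<Rightarrow> nat list \<Rightarrow> nat list \<Rightarrow> nat" where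
  "Atr r k T T' = card {t \<in> Ins r T (length T). std (msuf k t) = T'}"

lemma card_Ins_std:
  assumes "\<forall>z\<in>set T0. z < M"
  shows "card {t \<in> Ins r T0 M. std (msuf k t) = T'} = Atr r k (std T0) T'"
proof -
  define h where "h z = (if z = M then length T0 else rank T0 z)" for z
  let ?D = "insert M (set T0)"
  have iso: "\<forall>u\<in>?D. \<forall>v\<in>?D. (h u < h v \<longleftrightarrow> u < v)"
  proof (intro ballI)
    fix u v assume u: "u \<in> ?D" and v: "v \<in> ?D"
    have lt: "h z < length T0" if "z \<in> set T0" for z using that assms rank_lt by (auto simp: h_def)
    have hM: "h M = length T0" by (simp add: h_def)
    show "(h u < h v \<longleftrightarrow> u < v)"
    proof (cases "u = M")
      case True
      show ?thesis
      proof (cases "v = M")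
        case False
        then have v': "v \<in> set T0" using v by simp
        then show ?thesis using True lt[OF v'] assms hM by auto
      qed (use True in simp)
    next
      case False
      then have u': "u \<in> set T0" using u by simp
      show ?thesis
      proof (cases "v = M")
        case True
        then show ?thesis using u' lt assms hM by auto
      next
        case False
        then have v': "v \<in> set T0" using v by simp
        have "u \<noteq> M" "v \<noteq> M" using u' v' assms by auto
        then have "h u = rank T0 u" "h v = rank T0 v" by (auto simp: h_def)
        then show ?thesis using rank_mono[OF u' v'] rank_mono[OF v' u'] by (metis less_asym nat_neq_iff)
      qed
    qed
  qed
  have inj: "inj_on h ?D" using oiso_inj[OF iso] .
  have hT: "map h T0 = std T0"
    unfolding std_def h_def using assms by (intro map_cong) auto
  have hM: "h M = length T0" by (simp add: h_def)
  have bij: "bij_betw (map h) (Ins r T0 M) (Ins r (std T0) (length T0))"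
    using Ins_map[OF inj, of r] hT hM by simp
  have P: "std (msuf k (map h t)) = std (msuf k t)" if "t \<in> Ins r T0 M" for t
  proof -
    have st: "set t \<subseteq> ?D" using Ins_set[OF that] .
    then have i1: "\<forall>u\<in>set t. \<forall>v\<in>set t. (h u < h v \<longleftrightarrow> u < v)" using iso by blast
    have "set (msuf k t) \<subseteq> set t" unfolding msuf_def by (rule set_drop_subset)
    then have i2: "\<forall>u\<in>set (msuf k t). \<forall>v\<in>set (msuf k t). (h u < h v \<longleftrightarrow> u < v)" using i1 by blast
    show ?thesis using msuf_map[OF i1] std_map[OF i2] by simp
  qed
  have eq: "{t \<in> Ins r (std T0) (length T0). std (msuf k t) = T'} = map h ` {t \<in> Ins r T0 M. std (msuf k t) = T'}"
  proof
    show "{t \<in> Ins r (std T0) (length T0). std (msuf k t) = T'} \<subseteq> map h ` {t \<in> Ins r T0 M. std (msuf k t) = T'}"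
    proof
      fix t' assume t': "t' \<in> {t \<in> Ins r (std T0) (length T0). std (msuf k t) = T'}"
      then obtain t where t: "t \<in> Ins r T0 M" "t' = map h t" using bij unfolding bij_betw_def by blast
      then show "t' \<in> map h ` {t \<in> Ins r T0 M. std (msuf k t) = T'}" using P[OF t(1)] t' by auto
    qed
  next
    show "map h ` {t \<in> Ins r T0 M. std (msuf k t) = T'} \<subseteq> {t \<in> Ins r (std T0) (length T0). std (msuf k t) = T'}"
      using bij P unfolding bij_betw_def by auto
  qed
  have "card (map h ` {t \<in> Ins r T0 M. std (msuf k t) = T'}) = card {t \<in> Ins r T0 M. std (msuf k t) = T'}"
    by (rule card_image) (use bij in \<open>auto simp: bij_betw_def intro: inj_on_subset\<close>)
  then show ?thesis using eq by (simp add: Atr_def)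
qed



definition W :: "nat \<Rightarrow> nat \<Rightarrow> nat \<Rightarrow> nat list set" where
  "W k r n = {w \<in> words n r. avoid2 k w}"

lemma words_length: "w \<in> words n r \<Longrightarrow> length w = n * r"
proof -
  assume w: "w \<in> words n r"
  have "length w = sum (count_list w) {1..n}"
    using sum_count_set[of w "{1..n}"] w unfolding words_def by simp
  also have "\<dots> = sum (\<lambda>_. r) {1..n}" using w unfolding words_def by (intro sum.cong) auto
  finally show ?thesis by simp
qed

lemma words_finite: "finite (words n r)"
proof (rule finite_subset)
  show "words n r \<subseteq> {w. set w \<subseteq> {1..n} \<and> length w \<le> n * r}"
    using words_length unfolding words_def by fastforce
  show "finite {w. set w \<subseteq> {1..n} \<and> length w \<le> n * r}" by (rule finite_lists_length_le) simp
qed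

lemma W_finite: "finite (W k r n)"
  unfolding W_def using words_finite by simp

lemma count_filter: "count_list (filter P xs) a = (if P a then count_list xs a else 0)"
  by (induction xs) auto

lemma split_past:
  "p @ t = u @ M # v \<Longrightarrow> M \<notin> set p \<Longrightarrow> \<exists>u1. t = u1 @ M # v"
proof (induction p arbitrary: u)
  case Nil then show ?case by auto
next
  case (Cons a p)
  show ?case
  proof (cases u)
    case Nil
    then show ?thesis using Cons.prems by auto
  next
    case (Cons b u')
    then have "p @ t = u' @ M # v" using Cons.prems by simp
    then show ?thesis using Cons.IH Cons.prems by simp
  qed
qed

lemma pre_letters: "w' \<in> W k r n \<Longrightarrow> set (pre k w') \<subseteq> {1..n}"
proof -
  assume "w' \<in> W k r n"
  then have "set w' \<subseteq> {1..n}" unfolding W_def words_def by simp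
  moreover have "set (pre k w') \<subseteq> set w'" unfolding pre_def by (rule set_take_subset)
  ultimately show ?thesis by blast
qed

lemma msuf_letters: "w' \<in> W k r n \<Longrightarrow> set (msuf k w') \<subseteq> {1..n}"
proof -
  assume "w' \<in> W k r n"
  then have "set w' \<subseteq> {1..n}" unfolding W_def words_def by simp
  moreover have "set (msuf k w') \<subseteq> set w'" unfolding msuf_def by (rule set_drop_subset)
  ultimately show ?thesis by blast
qed

lemma lst_pre: "k \<ge> 2 \<Longrightarrow> length (pre k w) = lst k w"
  unfolding pre_def using lst_le by simp

lemma glue_filter:
  assumes "w' \<in> W k r n" "t \<in> Ins r (msuf k w') (Suc n)"
  shows "filter (\<lambda>z. z \<noteq> Suc n) (pre k w' @ t) = w'"
proof -
  have "filter (\<lambda>z. z \<noteq> Suc n) (pre k w') = pre k w'"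
    using pre_letters[OF assms(1)] by (auto simp: filter_id_conv)
  then show ?thesis using assms(2) pre_msuf[of k w'] unfolding Ins_def by simp
qed

lemma glue_W:
  assumes "k \<ge> 3" "w' \<in> W k r n" "t \<in> Ins r (msuf k w') (Suc n)"
  shows "pre k w' @ t \<in> W k r (Suc n)"
proof -
  let ?M = "Suc n" and ?w = "pre k w' @ t"
  have Mp: "?M \<notin> set (pre k w')" using pre_letters[OF assms(2)] by auto
  have st: "set t \<subseteq> insert ?M (set (msuf k w'))" using Ins_set[OF assms(3)] .
  have "set t \<subseteq> {1..?M}" using msuf_letters[OF assms(2)] st by fastforce
  then have setw: "set ?w \<subseteq> {1..?M}" using pre_letters[OF assms(2)] by fastforce
  have fw: "filter (\<lambda>z. z \<noteq> ?M) ?w = w'" using glue_filter[OF assms(2,3)] .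
  have cnt: "count_list ?w i = r" if i: "i \<in> {1..?M}" for i
  proof (cases "i = ?M")
    case True
    then show ?thesis using Mp assms(3) unfolding Ins_def by simp
  next
    case False
    then have "count_list ?w i = count_list (filter (\<lambda>z. z \<noteq> ?M) ?w) i" by (simp add: count_filter)
    also have "\<dots> = count_list w' i" using fw by simp
    also have "\<dots> = r" using assms(2) i False unfolding W_def words_def by auto
    finally show ?thesis .
  qed
  have "avoid2 k ?w"
  proof (subst avoid_max[of ?w ?M k])
    show "\<forall>z\<in>set ?w. z \<le> ?M" using setw by auto
    show "avoid2 k (filter (\<lambda>z. z \<noteq> ?M) ?w) \<and> (\<forall>u v. ?w = u @ ?M # v \<longrightarrow> good k (filter (\<lambda>z. z \<noteq> ?M) v))"
    proof (intro conjI allI impI)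
      show "avoid2 k (filter (\<lambda>z. z \<noteq> ?M) ?w)" using fw assms(2) unfolding W_def by simp
      fix u v assume uv: "?w = u @ ?M # v"
      obtain u1 where u1: "t = u1 @ ?M # v" using split_past[OF uv Mp] by blast
      have "filter (\<lambda>z. z \<noteq> ?M) t = msuf k w'" using assms(3) unfolding Ins_def by simp
      then have "filter (\<lambda>z. z \<noteq> ?M) u1 @ filter (\<lambda>z. z \<noteq> ?M) v = msuf k w'" using u1 by simp
      moreover have "subseq (filter (\<lambda>z. z \<noteq> ?M) v) (filter (\<lambda>z. z \<noteq> ?M) u1 @ filter (\<lambda>z. z \<noteq> ?M) v)"
        by (rule list_emb_append2) (rule subseq_order.order_refl)
      ultimately have "subseq (filter (\<lambda>z. z \<noteq> ?M) v) (msuf k w')" by simp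
      moreover have "good k (msuf k w')" using good_msuf[of k w'] assms(1) by simp
      ultimately show "good k (filter (\<lambda>z. z \<noteq> ?M) v)" using good_subseq by blast
    qed
  qed
  then show ?thesis unfolding W_def words_def using setw cnt by simp
qed

lemma glue_msuf:
  assumes "k \<ge> 3" "w' \<in> W k r n" "t \<in> Ins r (msuf k w') (Suc n)"
  shows "msuf k (pre k w' @ t) = msuf k t"
proof -
  let ?M = "Suc n" and ?w = "pre k w' @ t" and ?p = "pre k w'"
  define j0 where "j0 = lst k t"
  have j0le: "j0 \<le> length t" unfolding j0_def using lst_le assms(1) by simp
  have t_split: "t = take j0 t @ msuf k t" unfolding msuf_def j0_def by simp
  have lp: "length ?p = lst k w'" using lst_pre assms(1) by simp
  show ?thesis
  proof (rule msuf_unique[of _ "?p @ take j0 t"])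
    show "?w = (?p @ take j0 t) @ msuf k t" using t_split by (metis append_assoc)
    show "good k (msuf k t)" using good_msuf assms(1) by simp
    show "\<forall>i<length (?p @ take j0 t). \<not> good k (drop i ?w)"
    proof (intro allI impI)
      fix i assume i: "i < length (?p @ take j0 t)"
      show "\<not> good k (drop i ?w)"
      proof (cases "i < length ?p")
        case True
        show ?thesis
        proof
          assume g: "good k (drop i ?w)"
          have "filter (\<lambda>z. z \<noteq> ?M) (drop i ?w) = drop i w'"
          proof -
            have "drop i ?w = drop i ?p @ t" using True by simp
            moreover have "filter (\<lambda>z. z \<noteq> ?M) (drop i ?p) = drop i ?p"
              using pre_letters[OF assms(2)] set_drop_subset[of i ?p] by (auto simp: filter_id_conv)
            moreover have "filter (\<lambda>z. z \<noteq> ?M) t = msuf k w'" using assms(3) unfolding Ins_def by simp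
            moreover have "drop i w' = drop i ?p @ msuf k w'"
              using True pre_msuf[of k w'] by (metis drop_append le_less diff_is_0_eq drop_0)
            ultimately show ?thesis by simp
          qed
          then have "good k (drop i w')" using g good_subseq subseq_filter_left by metis
          moreover have "i < lst k w'" using True lp by simp
          ultimately show False using not_good_before by blast
        qed
      next
        case False
        then have "drop i ?w = drop (i - length ?p) t" by simp
        moreover have "i - length ?p < lst k t" using i False j0le unfolding j0_def by simp
        ultimately show ?thesis using not_good_before by simp
      qed
    qed
  qed
qed

lemma split_W:
  assumes "k \<ge> 3" "r \<ge> 1" "w \<in> W k r (Suc n)"
  defines "w' \<equiv> filter (\<lambda>z. z \<noteq> Suc n) w"
  shows "w' \<in> W k r n \<and> w = pre k w' @ drop (length (pre k w')) w \<and>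
         drop (length (pre k w')) w \<in> Ins r (msuf k w') (Suc n)"
proof -
  let ?M = "Suc n"
  have setw: "set w \<subseteq> {1..?M}" and cw: "\<forall>i\<in>{1..?M}. count_list w i = r" and aw: "avoid2 k w"
    using assms(3) unfolding W_def words_def by auto
  have le: "\<forall>z\<in>set w. z \<le> ?M" using setw by auto
  have am: "avoid2 k w' \<and> (\<forall>u v. w = u @ ?M # v \<longrightarrow> good k (filter (\<lambda>z. z \<noteq> ?M) v))"
    using avoid_max[OF le, of k] aw unfolding w'_def by simp
  have setw': "set w' \<subseteq> {1..n}" using setw unfolding w'_def by (auto simp: le_Suc_eq)
  have cw': "\<forall>i\<in>{1..n}. count_list w' i = r" using cw unfolding w'_def by (auto simp: count_filter)
  have Wn: "w' \<in> W k r n" using am setw' cw' unfolding W_def words_def by simp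
  have "count_list w ?M = r" using cw by simp
  then have "?M \<in> set w" using assms(2) count_list_0_iff[of w ?M] by auto
  then obtain u0 v0 where uv: "w = u0 @ ?M # v0" "?M \<notin> set u0" by (meson split_list_first)
  have gv: "good k (filter (\<lambda>z. z \<noteq> ?M) v0)" using am uv by blast
  have fu: "filter (\<lambda>z. z \<noteq> ?M) u0 = u0" using uv(2) by (auto simp: filter_id_conv)
  have w'eq: "w' = u0 @ filter (\<lambda>z. z \<noteq> ?M) v0" unfolding w'_def using uv fu by simp
  define p where "p = lst k w'"
  have "good k (drop (length u0) w')" using w'eq gv by simp
  then have pl: "p \<le> length u0" unfolding p_def by (rule lst_min)
  have lpre: "length (pre k w') = p" unfolding p_def using lst_pre assms(1) by simp
  have "pre k w' = take p u0" unfolding pre_def p_def[symmetric] using w'eq pl by simp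
  moreover have "take p w = take p u0" using uv pl by simp
  ultimately have w_eq: "w = pre k w' @ drop (length (pre k w')) w" using lpre by (metis append_take_drop_id)
  have dw: "drop p w = drop p u0 @ ?M # v0" using uv pl by simp
  have "filter (\<lambda>z. z \<noteq> ?M) (drop p w) = drop p u0 @ filter (\<lambda>z. z \<noteq> ?M) v0"
    using dw uv(2) set_drop_subset[of p u0] by (auto simp: filter_id_conv)
  also have "\<dots> = drop p w'" using w'eq pl by simp
  also have "\<dots> = msuf k w'" unfolding msuf_def p_def by simp
  finally have f1: "filter (\<lambda>z. z \<noteq> ?M) (drop p w) = msuf k w'" .
  have "count_list (take p w) ?M = 0" using \<open>take p w = take p u0\<close> uv(2) set_take_subset[of p u0]
    by (auto simp: count_list_0_iff)
  then have "count_list (drop p w) ?M = r"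
    using \<open>count_list w ?M = r\<close> count_list_append[of "take p w" "drop p w" ?M] by simp
  then have "drop p w \<in> Ins r (msuf k w') (Suc n)" using f1 unfolding Ins_def by simp
  then show ?thesis using Wn w_eq lpre by simp
qed



lemma lin_dep:
  fixes v :: "'i \<Rightarrow> 'x \<Rightarrow> rat"
  assumes "finite S"
  shows "finite I \<Longrightarrow> card S < card I \<Longrightarrow> \<exists>a. (\<exists>i\<in>I. a i \<noteq> 0) \<and> (\<forall>y\<in>S. (\<Sum>i\<in>I. a i * v i y) = 0)"
  using assms
proof (induction S arbitrary: I v rule: finite_induct)
  case empty
  then have "I \<noteq> {}" by auto
  then show ?case by (intro exI[of _ "\<lambda>_. 1"]) auto
next
  case (insert x S)
  show ?case
  proof (cases "\<forall>i\<in>I. v i x = 0")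
    case True
    have "card S < card I" using insert by simp
    then obtain a where a: "\<exists>i\<in>I. a i \<noteq> 0" "\<forall>y\<in>S. (\<Sum>i\<in>I. a i * v i y) = 0"
      using insert.IH[OF insert.prems(1)] by blast
    then show ?thesis using True by (intro exI[of _ a]) auto
  next
    case False
    then obtain j where j: "j \<in> I" "v j x \<noteq> 0" by blast
    define I' where "I' = I - {j}"
    have fI': "finite I'" unfolding I'_def using insert.prems by simp
    have cI': "card S < card I'" unfolding I'_def using insert j by (simp add: card_Diff_singleton)
    define ws where "ws i y = v i y - (v i x / v j x) * v j y" for i y
    obtain b where b: "\<exists>i\<in>I'. b i \<noteq> 0" "\<forall>y\<in>S. (\<Sum>i\<in>I'. b i * ws i y) = 0"
      using insert.IH[OF fI' cI', of ws] by blast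
    define a where "a i = (if i = j then - (\<Sum>i\<in>I'. b i * v i x) / v j x else b i)" for i
    have sumI: "(\<Sum>i\<in>I. a i * v i y) = a j * v j y + (\<Sum>i\<in>I'. b i * v i y)" for y
    proof -
      have "(\<Sum>i\<in>I. a i * v i y) = a j * v j y + (\<Sum>i\<in>I'. a i * v i y)"
        unfolding I'_def using j insert.prems(1) by (simp add: sum.remove)
      moreover have "(\<Sum>i\<in>I'. a i * v i y) = (\<Sum>i\<in>I'. b i * v i y)"
        unfolding I'_def a_def by (intro sum.cong) auto
      ultimately show ?thesis by simp
    qed
    have ws_sum: "(\<Sum>i\<in>I'. b i * ws i y) = (\<Sum>i\<in>I'. b i * v i y) - (\<Sum>i\<in>I'. b i * v i x) / v j x * v j y" for y
    proof -
      have "(\<Sum>i\<in>I'. b i * ws i y) = (\<Sum>i\<in>I'. b i * v i y - (b i * v i x) / v j x * v j y)"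
        unfolding ws_def by (intro sum.cong) (auto simp: algebra_simps)
      also have "\<dots> = (\<Sum>i\<in>I'. b i * v i y) - (\<Sum>i\<in>I'. (b i * v i x) / v j x * v j y)"
        by (simp add: sum_subtractf)
      also have "(\<Sum>i\<in>I'. (b i * v i x) / v j x * v j y) = (\<Sum>i\<in>I'. b i * v i x) / v j x * v j y"
        by (simp add: sum_distrib_right sum_divide_distrib)
      finally show ?thesis .
    qed
    have aj: "a j = - (\<Sum>i\<in>I'. b i * v i x) / v j x" unfolding a_def by simp
    show ?thesis
    proof (intro exI[of _ a] conjI ballI)
      obtain i where i: "i \<in> I'" "b i \<noteq> 0" using b(1) by blast
      then have "i \<in> I" "a i = b i" unfolding a_def I'_def by auto
      then show "\<exists>i\<in>I. a i \<noteq> 0" using i(2) by metis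
    next
      fix y assume y: "y \<in> insert x S"
      show "(\<Sum>i\<in>I. a i * v i y) = 0"
      proof (cases "y = x")
        case True
        then show ?thesis using sumI[of x] aj j(2) by simp
      next
        case False
        then have "y \<in> S" using y by simp
        then have "(\<Sum>i\<in>I'. b i * v i y) = (\<Sum>i\<in>I'. b i * v i x) / v j x * v j y"
          using b(2) ws_sum[of y] by simp
        then show ?thesis using sumI[of y] aj by simp
      qed
    qed
  qed
qed

lemma sum_rev_idx: "(\<Sum>i=1..m. f (m - i)) = (\<Sum>j<m. (f j :: rat))" for m :: nat
  by (rule sum.reindex_bij_witness[of _ "\<lambda>j. m - j" "\<lambda>i. m - i"]) auto

lemma linrec:
  fixes v :: "nat \<Rightarrow> 'x \<Rightarrow> rat" and B :: "'x \<Rightarrow> 'x \<Rightarrow> rat"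
  assumes fin: "finite S" and step: "\<And>n y. y \<in> S \<Longrightarrow> v (Suc n) y = (\<Sum>x\<in>S. B x y * v n x)"
  shows "\<exists>m c. \<forall>n. (\<Sum>y\<in>S. v (n+m) y) = (\<Sum>i=1..m. c i * (\<Sum>y\<in>S. v (n+m-i) y))"
proof -
  define D where "D n = (\<Sum>y\<in>S. v n y)" for n
  obtain a where a: "\<exists>i\<in>{..card S}. a i \<noteq> 0" "\<forall>y\<in>S. (\<Sum>i\<in>{..card S}. a i * v i y) = 0"
    using lin_dep[OF fin, of "{..card S}" v] by auto
  define m where "m = Max {j \<in> {..card S}. a j \<noteq> 0}"
  have fJ: "finite {j \<in> {..card S}. a j \<noteq> 0}" by simp
  have neJ: "{j \<in> {..card S}. a j \<noteq> 0} \<noteq> {}" using a(1) by auto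
  have am: "a m \<noteq> 0" and mle: "m \<le> card S" using Max_in[OF fJ neJ] unfolding m_def by auto
  have zero_above: "a j = 0" if "m < j" "j \<le> card S" for j
    using Max_ge[OF fJ, of j] that unfolding m_def by fastforce
  have base: "\<forall>y\<in>S. (\<Sum>j\<le>m. a j * v j y) = 0"
  proof
    fix y assume y: "y \<in> S"
    have "(\<Sum>j\<le>m. a j * v j y) = (\<Sum>j\<in>{..card S}. a j * v j y)"
      by (rule sum.mono_neutral_left) (use mle zero_above in auto)
    then show "(\<Sum>j\<le>m. a j * v j y) = 0" using a(2) y by simp
  qed
  have prp: "\<forall>y\<in>S. (\<Sum>j\<le>m. a j * v (n + j) y) = 0" for n
  proof (induction n)
    case 0 then show ?case using base by simp
  next
    case (Suc n)
    show ?case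
    proof
      fix y assume y: "y \<in> S"
      have "(\<Sum>j\<le>m. a j * v (Suc n + j) y) = (\<Sum>j\<le>m. a j * (\<Sum>x\<in>S. B x y * v (n + j) x))"
        using step[OF y] by simp
      also have "\<dots> = (\<Sum>j\<le>m. \<Sum>x\<in>S. B x y * (a j * v (n + j) x))"
        by (simp add: sum_distrib_left algebra_simps)
      also have "\<dots> = (\<Sum>x\<in>S. \<Sum>j\<le>m. B x y * (a j * v (n + j) x))" by (rule sum.swap)
      also have "\<dots> = (\<Sum>x\<in>S. B x y * (\<Sum>j\<le>m. a j * v (n + j) x))" by (simp add: sum_distrib_left)
      also have "\<dots> = 0" using Suc.IH by simp
      finally show "(\<Sum>j\<le>m. a j * v (Suc n + j) y) = 0" .
    qed
  qed
  have Dprop: "(\<Sum>j\<le>m. a j * D (n + j)) = 0" for n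
  proof -
    have "(\<Sum>j\<le>m. a j * D (n + j)) = (\<Sum>j\<le>m. \<Sum>y\<in>S. a j * v (n + j) y)"
      unfolding D_def by (simp add: sum_distrib_left)
    also have "\<dots> = (\<Sum>y\<in>S. \<Sum>j\<le>m. a j * v (n + j) y)" by (rule sum.swap)
    also have "\<dots> = 0" using prp[of n] by simp
    finally show ?thesis .
  qed
  define c where "c i = - a (m - i) / a m" for i
  have "D (n + m) = (\<Sum>i=1..m. c i * D (n + m - i))" for n
  proof -
    have "(\<Sum>j\<le>m. a j * D (n + j)) = a m * D (n + m) + (\<Sum>j<m. a j * D (n + j))"
      by (simp add: lessThan_Suc_atMost[symmetric])
    then have e: "a m * D (n + m) = - (\<Sum>j<m. a j * D (n + j))" using Dprop[of n] by simp
    have "(\<Sum>i=1..m. c i * D (n + m - i)) = (\<Sum>i=1..m. (\<lambda>j. - a j / a m * D (n + j)) (m - i))"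
      unfolding c_def by (intro sum.cong) auto
    also have "\<dots> = (\<Sum>j<m. - a j / a m * D (n + j))" by (rule sum_rev_idx)
    also have "\<dots> = - (\<Sum>j<m. a j * D (n + j)) / a m"
      by (simp add: sum_divide_distrib sum_negf)
    also have "\<dots> = D (n + m)" using e am by (simp add: field_simps)
    finally show ?thesis by simp
  qed
  then show ?thesis unfolding D_def by blast
qed



lemma card_step:
  assumes "k \<ge> 3" "r \<ge> 1"
  shows "card {w \<in> W k r (Suc n). std (msuf k w) = T'} = (\<Sum>w'\<in>W k r n. Atr r k (std (msuf k w')) T')"
proof -
  define F where "F w' = (\<lambda>t. pre k w' @ t) ` {t \<in> Ins r (msuf k w') (Suc n). std (msuf k t) = T'}" for w'
  have eq: "{w \<in> W k r (Suc n). std (msuf k w) = T'} = (\<Union>w'\<in>W k r n. F w')"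
  proof
    show "{w \<in> W k r (Suc n). std (msuf k w) = T'} \<subseteq> (\<Union>w'\<in>W k r n. F w')"
    proof
      fix w assume w: "w \<in> {w \<in> W k r (Suc n). std (msuf k w) = T'}"
      define w' where "w' = filter (\<lambda>z. z \<noteq> Suc n) w"
      define t where "t = drop (length (pre k w')) w"
      have sp: "w' \<in> W k r n" "w = pre k w' @ t" "t \<in> Ins r (msuf k w') (Suc n)"
        using split_W[OF assms, of w n] w unfolding w'_def t_def by auto
      have "msuf k w = msuf k t" using glue_msuf[OF assms(1) sp(1,3)] sp(2) by simp
      then have "t \<in> {t \<in> Ins r (msuf k w') (Suc n). std (msuf k t) = T'}" using sp(3) w by simp
      then have "w \<in> F w'" unfolding F_def using sp(2) by blast
      then show "w \<in> (\<Union>w'\<in>W k r n. F w')" using sp(1) by blast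
    qed
  next
    show "(\<Union>w'\<in>W k r n. F w') \<subseteq> {w \<in> W k r (Suc n). std (msuf k w) = T'}"
    proof
      fix w assume "w \<in> (\<Union>w'\<in>W k r n. F w')"
      then obtain w' t where wt: "w' \<in> W k r n" "t \<in> Ins r (msuf k w') (Suc n)" "std (msuf k t) = T'" "w = pre k w' @ t"
        unfolding F_def by blast
      show "w \<in> {w \<in> W k r (Suc n). std (msuf k w) = T'}"
        using glue_W[OF assms(1) wt(1,2)] glue_msuf[OF assms(1) wt(1,2)] wt(3,4) by simp
    qed
  qed
  have finF: "finite (F w')" for w' unfolding F_def using Ins_finite by simp
  have disj: "\<forall>w1\<in>W k r n. \<forall>w2\<in>W k r n. w1 \<noteq> w2 \<longrightarrow> F w1 \<inter> F w2 = {}"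
  proof (intro ballI impI)
    fix w1 w2 assume w: "w1 \<in> W k r n" "w2 \<in> W k r n" "w1 \<noteq> w2"
    show "F w1 \<inter> F w2 = {}"
    proof (rule ccontr)
      assume "F w1 \<inter> F w2 \<noteq> {}"
      then obtain t1 t2 where t: "t1 \<in> Ins r (msuf k w1) (Suc n)" "t2 \<in> Ins r (msuf k w2) (Suc n)"
        "pre k w1 @ t1 = pre k w2 @ t2" unfolding F_def by blast
      have "w1 = filter (\<lambda>z. z \<noteq> Suc n) (pre k w1 @ t1)" using glue_filter[OF w(1) t(1)] by simp
      also have "\<dots> = filter (\<lambda>z. z \<noteq> Suc n) (pre k w2 @ t2)" using t(3) by simp
      also have "\<dots> = w2" using glue_filter[OF w(2) t(2)] by simp
      finally show False using w(3) by simp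
    qed
  qed
  have "card {w \<in> W k r (Suc n). std (msuf k w) = T'} = (\<Sum>w'\<in>W k r n. card (F w'))"
    unfolding eq by (rule card_UN_disjoint[OF W_finite]) (use finF disj in auto)
  also have "\<dots> = (\<Sum>w'\<in>W k r n. Atr r k (std (msuf k w')) T')"
  proof (rule sum.cong)
    fix w' assume w': "w' \<in> W k r n"
    have "card (F w') = card {t \<in> Ins r (msuf k w') (Suc n). std (msuf k t) = T'}"
      unfolding F_def by (rule card_image) (simp add: inj_on_def)
    also have "\<dots> = Atr r k (std (msuf k w')) T'"
      by (rule card_Ins_std) (use msuf_letters[OF w'] in auto)
    finally show "card (F w') = Atr r k (std (msuf k w')) T'" .
  qed simp
  finally show ?thesis .
qed

definition Sst :: "nat \<Rightarrow> nat list set" where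
  "Sst L = {T. set T \<subseteq> {..<L} \<and> length T \<le> L}"

lemma Sst_finite: "finite (Sst L)"
  unfolding Sst_def by (rule finite_lists_length_le) simp

lemma state_in:
  assumes "k \<ge> 3" "w' \<in> W k r n"
  shows "std (msuf k w') \<in> Sst (r * (2 * (k - 1)))"
proof -
  have cnt: "\<forall>a. count_list (msuf k w') a \<le> r"
  proof
    fix a
    have "count_list (msuf k w') a \<le> count_list w' a"
      using count_list_append[of "pre k w'" "msuf k w'" a] pre_msuf[of k w'] by simp
    also have "\<dots> \<le> r"
    proof (cases "a \<in> {1..n}")
      case True then show ?thesis using assms(2) unfolding W_def words_def by simp
    next
      case False
      then have "a \<notin> set w'" using assms(2) unfolding W_def words_def by auto
      then show ?thesis by simp
    qed
    finally show "count_list (msuf k w') a \<le> r" .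
  qed
  have "length (msuf k w') \<le> r * (2 * (k - 1))"
    using good_bound[OF assms(1) _ cnt] good_msuf[of k w'] assms(1) by simp
  then show ?thesis unfolding Sst_def using set_std[of "msuf k w'"] by auto
qed

lemma compl_words:
  assumes "w \<in> words n r"
  shows "map (\<lambda>x. Suc n - x) w \<in> words n r"
    and "map (\<lambda>x. Suc n - x) (map (\<lambda>x. Suc n - x) w) = w"
    and "avoid2 k (map (\<lambda>x. Suc n - x) w) \<longleftrightarrow> avoids w [1,2,3,4] \<and> avoids w (pat1k k)"
proof -
  let ?c = "\<lambda>x. Suc n - x"
  have sw: "set w \<subseteq> {1..n}" and cw: "\<forall>i\<in>{1..n}. count_list w i = r" using assms unfolding words_def by auto
  have injc: "inj_on ?c {..Suc n}" by (rule inj_onI) auto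
  show "map ?c w \<in> words n r" unfolding words_def
  proof (intro CollectI conjI ballI)
    show "set (map ?c w) \<subseteq> {1..n}"
    proof
      fix y assume "y \<in> set (map ?c w)"
      then obtain x where "x \<in> set w" "y = Suc n - x" by auto
      moreover then have "x \<in> {1..n}" using sw by blast
      ultimately show "y \<in> {1..n}" by auto
    qed
    fix i assume i: "i \<in> {1..n}"
    have "i = ?c (?c i)" using i by simp
    then have "count_list (map ?c w) i = count_list (map ?c w) (?c (?c i))" by simp
    also have "\<dots> = count_list w (?c i)"
      by (rule count_list_map_inj) (rule inj_on_subset[OF injc], use sw i in auto)
    also have "\<dots> = r"
    proof -
      have "?c i \<in> {1..n}" using i by auto
      then show ?thesis using cw by blast
    qed
    finally show "count_list (map ?c w) i = r" .
  qed
  show "map ?c (map ?c w) = w" using sw by (induction w) auto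
  have anti: "\<forall>u\<in>set w. \<forall>v\<in>set w. (?c u < ?c v \<longleftrightarrow> v < u)" using sw by auto
  have p1: "[4,3,2,1] = map (\<lambda>x. 5 - x) [1,2,3,4::nat]" by simp
  have p2: "k # [1..<k] = map (\<lambda>x. Suc k - x) (pat1k k)"
  proof -
    have "map (\<lambda>x. Suc k - x) (rev [2..<Suc k]) = [1..<k]"
      by (rule nth_equalityI) (auto simp: rev_nth nth_upt simp del: upt_Suc)
    then show ?thesis unfolding pat1k_def by simp
  qed
  have a1: "\<forall>u\<in>set [1,2,3,4::nat]. \<forall>v\<in>set [1,2,3,4::nat]. ((\<lambda>x. 5 - x) u < (\<lambda>x. 5 - x) v \<longleftrightarrow> v < u)" by auto
  have spk: "set (pat1k k) \<subseteq> {..Suc k}" unfolding pat1k_def by auto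
  then have a2: "\<forall>u\<in>set (pat1k k). \<forall>v\<in>set (pat1k k). ((\<lambda>x. Suc k - x) u < (\<lambda>x. Suc k - x) v \<longleftrightarrow> v < u)" by fastforce
  show "avoid2 k (map ?c w) \<longleftrightarrow> avoids w [1,2,3,4] \<and> avoids w (pat1k k)"
    unfolding avoid2_def avoids_def p1 p2
    using contains_map_anti[OF anti a1] contains_map_anti[OF anti a2] by simp
qed

lemma d_eq_W: "d k r n = card (W k r n)"
proof -
  let ?c = "\<lambda>x. Suc n - x"
  let ?O = "{w \<in> words n r. avoids w [1,2,3,4] \<and> avoids w (pat1k k)}"
  have inj: "inj_on (map ?c) ?O"
  proof (rule inj_onI)
    fix w1 w2 assume w: "w1 \<in> ?O" "w2 \<in> ?O" "map ?c w1 = map ?c w2"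
    have e1: "map ?c (map ?c w1) = w1" using w(1) compl_words(2) by blast
    have e2: "map ?c (map ?c w2) = w2" using w(2) compl_words(2) by blast
    show "w1 = w2" using e1 e2 w(3) by metis
  qed
  have img: "map ?c ` ?O = W k r n"
  proof
    show "map ?c ` ?O \<subseteq> W k r n" unfolding W_def using compl_words(1,3) by blast
  next
    show "W k r n \<subseteq> map ?c ` ?O"
    proof
      fix w assume w: "w \<in> W k r n"
      then have ww: "w \<in> words n r" "avoid2 k w" unfolding W_def by auto
      have m: "map ?c w \<in> words n r" using compl_words(1)[OF ww(1)] .
      have e: "map ?c (map ?c w) = w" by (rule compl_words(2)[OF ww(1)])
      have "avoid2 k (map ?c (map ?c w))" using e ww(2) by (simp only:)
      then have "map ?c w \<in> ?O" using compl_words(3)[OF m, of k] m by blast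
      moreover have "w = map ?c (map ?c w)" using e by (simp only:)
      ultimately show "w \<in> map ?c ` ?O" by blast
    qed
  qed
  show ?thesis unfolding d_def using card_image[OF inj] img by simp
qed

theorem mainTheorem4:
  fixes k r :: nat
  assumes "k \<ge> 3" and "r \<ge> 1"
  shows "\<exists>(m::nat) (c::nat \<Rightarrow> rat) (N::nat). \<forall>n\<ge>N.
           of_nat (d k r (n + m)) = (\<Sum>i=1..m. c i * of_nat (d k r (n + m - i)))"
proof -
  define S where "S = Sst (r * (2 * (k - 1)))"
  have fS: "finite S" unfolding S_def by (rule Sst_finite)
  define cn where "cn n T = card {w \<in> W k r n. std (msuf k w) = T}" for n T
  define v :: "nat \<Rightarrow> nat list \<Rightarrow> rat" where "v n T = of_nat (cn n T)" for n T
  define B :: "nat list \<Rightarrow> nat list \<Rightarrow> rat" where "B T T' = of_nat (Atr r k T T')" for T T'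
  have sub: "(\<lambda>w. std (msuf k w)) ` W k r n \<subseteq> S" for n
    using state_in[OF assms(1)] unfolding S_def by blast
  have step: "v (Suc n) y = (\<Sum>x\<in>S. B x y * v n x)" if "y \<in> S" for n y
  proof -
    have "cn (Suc n) y = (\<Sum>w'\<in>W k r n. Atr r k (std (msuf k w')) y)"
      unfolding cn_def by (rule card_step[OF assms])
    also have "\<dots> = (\<Sum>T\<in>S. \<Sum>w'\<in>{w' \<in> W k r n. std (msuf k w') = T}. Atr r k (std (msuf k w')) y)"
      by (rule sum.group[symmetric]) (use W_finite fS sub in auto)
    also have "\<dots> = (\<Sum>T\<in>S. Atr r k T y * cn n T)"
      unfolding cn_def by (intro sum.cong) auto
    finally show ?thesis unfolding v_def B_def by (simp add: of_nat_sum)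
  qed
  have dsum: "of_nat (d k r n) = (\<Sum>y\<in>S. v n y)" for n
  proof -
    have "card (W k r n) = (\<Sum>w\<in>W k r n. 1)" by simp
    also have "\<dots> = (\<Sum>T\<in>S. \<Sum>w\<in>{w \<in> W k r n. std (msuf k w) = T}. 1)"
      by (rule sum.group[symmetric]) (use W_finite fS sub in auto)
    also have "\<dots> = (\<Sum>T\<in>S. cn n T)" unfolding cn_def by simp
    finally show ?thesis using d_eq_W unfolding v_def by (simp add: of_nat_sum)
  qed
  obtain m c where mc: "\<forall>n. (\<Sum>y\<in>S. v (n+m) y) = (\<Sum>i=1..m. c i * (\<Sum>y\<in>S. v (n+m-i) y))"
    using linrec[where v=v and B=B, OF fS step] by blast
  show ?thesis
    by (intro exI[of _ m] exI[of _ c] exI[of _ 0]) (use mc dsum in simp)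
qed

end
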